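(* Let $\mathcal P$ be a pyramid. If there exists $r>0$ such that $$\inf_{X\in\mathcal P}\sup_{x\in X}\mu_X(B_r(x))=0,$$ then there is no mm-space $X$ with $\mathcal P=\mathcal P_X$.
   Context: An mm-space is a triple $(X,d_X,\mu_X)$ with $(X,d_X)$ complete separable metric and $\mu_X$ a Borel probability measure; $\mathcal X$ is the set of mm-isomorphism classes. $Y\prec X$ means there is a 1-Lipschitz $f:X\to Y$ with $f_*\mu_X=\mu_Y$. The box distance $\square(X,Y)$ is the infimum of $\max\{\operatorname{dis}(S),1-\pi(S)\}$ over couplings $\pi$ of $\mu_X,\mu_Y$ and Borel $S\subset X\times Y$, $\operatorname{dis}(S)=\sup\{|d_X(x,x')-d_Y(y,y')|:(x,y),(x',y')\in S\}$. A pyramid is a nonempty box-closed subset of $\mathcal X$ closed downward under $\prec$ and directed; $\mathcal P_X=\{Y\in\mathcal X:Y\prec X\}$. $B_r(x)$ denotes the closed ball of radius $r$ about $x$. *)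

theory Defs
  imports "HOL-Analysis.Analysis" "HOL-Probability.Probability"
begin

text \<open>An mm-space is represented concretely on the ground type real (every complete
separable metric space has cardinality at most the continuum, so every mm-space is
mm-isomorphic to one of these).\<close>

record mmspace =
  mm_carrier :: "real set"
  mm_dist    :: "real \<Rightarrow> real \<Rightarrow> real"
  mm_meas    :: "real measure"

definition mm_borel :: "real set \<Rightarrow> (real \<Rightarrow> real \<Rightarrow> real) \<Rightarrow> real measure" where
  "mm_borel M d = sigma M {U. openin (Metric_space.mtopology M d) U}"

definition mm_space :: "mmspace \<Rightarrow> bool" where
  "mm_space X \<longleftrightarrow>
     Metric_space (mm_carrier X) (mm_dist X)
   \<and> Metric_space.mcomplete (mm_carrier X) (mm_dist X)
   \<and> separable_space (Metric_space.mtopology (mm_carrier X) (mm_dist X))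
   \<and> space (mm_meas X) = mm_carrier X
   \<and> sets (mm_meas X) = sets (mm_borel (mm_carrier X) (mm_dist X))
   \<and> prob_space (mm_meas X)"

definition dominated_by :: "mmspace \<Rightarrow> mmspace \<Rightarrow> bool" (infix "\<prec>" 50) where
  "Y \<prec> X \<longleftrightarrow> (\<exists>f. f ` mm_carrier X \<subseteq> mm_carrier Y
      \<and> (\<forall>x\<in>mm_carrier X. \<forall>x'\<in>mm_carrier X. mm_dist Y (f x) (f x') \<le> mm_dist X x x')
      \<and> f \<in> measurable (mm_meas X) (mm_meas Y)
      \<and> distr (mm_meas X) (mm_meas Y) f = mm_meas Y)"

definition couplings :: "mmspace \<Rightarrow> mmspace \<Rightarrow> (real \<times> real) measure set" where
  "couplings X Y = {\<pi>. sets \<pi> = sets (mm_meas X \<Otimes>\<^sub>M mm_meas Y) \<and> prob_space \<pi>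
       \<and> distr \<pi> (mm_meas X) fst = mm_meas X \<and> distr \<pi> (mm_meas Y) snd = mm_meas Y}"

definition dis :: "mmspace \<Rightarrow> mmspace \<Rightarrow> (real \<times> real) set \<Rightarrow> ereal" where
  "dis X Y S = (SUP p\<in>S \<times> S. ereal \<bar>mm_dist X (fst (fst p)) (fst (snd p))
                                   - mm_dist Y (snd (fst p)) (snd (snd p))\<bar>)"

definition box :: "mmspace \<Rightarrow> mmspace \<Rightarrow> real" where
  "box X Y = real_of_ereal (INF q\<in>couplings X Y \<times> sets (mm_meas X \<Otimes>\<^sub>M mm_meas Y).
       max (dis X Y (snd q)) (ereal (1 - measure (fst q) (snd q))))"

definition box_closed :: "mmspace set \<Rightarrow> bool" where
  "box_closed P \<longleftrightarrow> (\<forall>X Xs. mm_space X \<and> (\<forall>n. Xs n \<in> P) \<and> (\<lambda>n. box (Xs n) X) \<longlonglongrightarrow> 0 \<longrightarrow> X \<in> P)"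

definition pyramid :: "mmspace set \<Rightarrow> bool" where
  "pyramid P \<longleftrightarrow> P \<noteq> {} \<and> (\<forall>X\<in>P. mm_space X) \<and> box_closed P
     \<and> (\<forall>X\<in>P. \<forall>Y. mm_space Y \<and> Y \<prec> X \<longrightarrow> Y \<in> P)
     \<and> (\<forall>X\<in>P. \<forall>X'\<in>P. \<exists>Y\<in>P. X \<prec> Y \<and> X' \<prec> Y)"

definition pyramid_of :: "mmspace \<Rightarrow> mmspace set" where
  "pyramid_of X = {Y. mm_space Y \<and> Y \<prec> X}"

definition cball_mm :: "mmspace \<Rightarrow> real \<Rightarrow> real \<Rightarrow> real set" where
  "cball_mm X x r = Metric_space.mcball (mm_carrier X) (mm_dist X) x r"

end

theory Submission
  imports Defs
begin

lemma mm_cball_sets: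
  assumes X: "mm_space X"
  shows "cball_mm X x r \<in> sets (mm_meas X)"
proof -
  have MS: "Metric_space (mm_carrier X) (mm_dist X)" using X by (simp add: mm_space_def)
  interpret Metric_space "mm_carrier X" "mm_dist X" by (rule MS)
  have G: "{U. openin mtopology U} \<subseteq> Pow (mm_carrier X)"
    using openin_subset by fastforce
  have "closedin mtopology (mcball x r)" by (rule closedin_mcball)
  then have O: "openin mtopology (mm_carrier X - mcball x r)"
    and sub: "mcball x r \<subseteq> mm_carrier X"
    by (auto simp: closedin_def)
  have "mm_carrier X - (mm_carrier X - mcball x r) \<in> sigma_sets (mm_carrier X) {U. openin mtopology U}"
    by (rule sigma_sets.Compl) (use O in auto)
  moreover have "mm_carrier X - (mm_carrier X - mcball x r) = mcball x r" using sub by blast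
  ultimately show ?thesis using X G
    by (simp add: mm_space_def mm_borel_def cball_mm_def sets_measure_of)
qed

lemma mm_pos_ball:
  assumes X: "mm_space X" and r: "r > 0"
  shows "\<exists>x\<in>mm_carrier X. measure (mm_meas X) (cball_mm X x r) > 0"
proof (rule ccontr)
  assume H: "\<not> ?thesis"
  have MS: "Metric_space (mm_carrier X) (mm_dist X)" using X by (simp add: mm_space_def)
  interpret Metric_space "mm_carrier X" "mm_dist X" by (rule MS)
  have PS: "prob_space (mm_meas X)" and sp: "space (mm_meas X) = mm_carrier X"
    using X by (auto simp: mm_space_def)
  interpret prob_space "mm_meas X" by (rule PS)
  obtain C where C: "countable C" "C \<subseteq> mm_carrier X" "mtopology closure_of C = mm_carrier X"
    using X by (auto simp: mm_space_def separable_space_def)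
  have cover: "mm_carrier X \<subseteq> (\<Union>c\<in>C. cball_mm X c r)"
  proof
    fix x assume x: "x \<in> mm_carrier X"
    then have "x \<in> mtopology closure_of C" using C by simp
    moreover have "x \<in> mball x r" using x r by simp
    ultimately obtain c where "c \<in> C" "c \<in> mball x r"
      unfolding closure_of_def using openin_mball by blast
    then show "x \<in> (\<Union>c\<in>C. cball_mm X c r)"
      by (auto simp: cball_mm_def commute intro!: bexI[of _ c])
  qed
  have "(\<Union>c\<in>C. cball_mm X c r) \<in> null_sets (mm_meas X)"
  proof (rule null_sets_UN'[OF C(1)])
    fix c assume "c \<in> C"
    then have "measure (mm_meas X) (cball_mm X c r) = 0" using H C(2)
      by (meson measure_nonneg not_less order_antisym subsetD)
    then show "cball_mm X c r \<in> null_sets (mm_meas X)"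
      using mm_cball_sets[OF X] by (simp add: emeasure_eq_measure null_sets_def)
  qed
  then have "space (mm_meas X) \<in> null_sets (mm_meas X)"
    using cover sp null_sets_subset by (metis sets.top)
  then show False using prob_space by (simp add: null_sets_def emeasure_eq_measure)
qed

lemma mm_dom_ball:
  assumes X: "mm_space X" and Y: "mm_space Y" and D: "dominated_by Y X" and x: "x \<in> mm_carrier X"
  shows "\<exists>y\<in>mm_carrier Y. measure (mm_meas X) (cball_mm X x r) \<le> measure (mm_meas Y) (cball_mm Y y r)"
proof -
  obtain f where f: "f ` mm_carrier X \<subseteq> mm_carrier Y"
      "\<forall>x\<in>mm_carrier X. \<forall>x'\<in>mm_carrier X. mm_dist Y (f x) (f x') \<le> mm_dist X x x'"
      "f \<in> measurable (mm_meas X) (mm_meas Y)"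
      "distr (mm_meas X) (mm_meas Y) f = mm_meas Y"
    using D by (auto simp: dominated_by_def)
  have PS: "prob_space (mm_meas X)" and sp: "space (mm_meas X) = mm_carrier X"
    using X by (auto simp: mm_space_def)
  have MX: "Metric_space (mm_carrier X) (mm_dist X)" using X by (simp add: mm_space_def)
  have MY: "Metric_space (mm_carrier Y) (mm_dist Y)" using Y by (simp add: mm_space_def)
  have fx: "f x \<in> mm_carrier Y" using f(1) x by blast
  have A: "cball_mm Y (f x) r \<in> sets (mm_meas Y)" by (rule mm_cball_sets[OF Y])
  have sub: "cball_mm X x r \<subseteq> f -` cball_mm Y (f x) r \<inter> space (mm_meas X)"
  proof
    fix z assume z: "z \<in> cball_mm X x r"
    then have zc: "z \<in> mm_carrier X" and d: "mm_dist X x z \<le> r"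
      using Metric_space.in_mcball[OF MX] by (auto simp: cball_mm_def)
    have "mm_dist Y (f x) (f z) \<le> r" using f(2) x zc d by force
    then show "z \<in> f -` cball_mm Y (f x) r \<inter> space (mm_meas X)"
      using Metric_space.in_mcball[OF MY] fx f(1) zc sp by (auto simp: cball_mm_def)
  qed
  have "measure (mm_meas X) (cball_mm X x r) \<le> measure (mm_meas X) (f -` cball_mm Y (f x) r \<inter> space (mm_meas X))"
    apply (rule finite_measure.finite_measure_mono[OF _ sub])
    using PS prob_space_def apply blast
    using measurable_sets[OF f(3) A] .
  also have "\<dots> = measure (distr (mm_meas X) (mm_meas Y) f) (cball_mm Y (f x) r)"
    using measure_distr[OF f(3) A] by simp
  also have "\<dots> = measure (mm_meas Y) (cball_mm Y (f x) r)" using f(4) by simp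
  finally show ?thesis using fx by blast
qed

theorem proposition6p8:
  fixes P :: "mmspace set" and r :: real
  assumes "pyramid P"
    and "r > 0"
    and "(INF X\<in>P. SUP x\<in>mm_carrier X. measure (mm_meas X) (cball_mm X x r)) = 0"
  shows "\<not> (\<exists>X. mm_space X \<and> P = pyramid_of X)"
proof
  assume "\<exists>X. mm_space X \<and> P = pyramid_of X"
  then obtain X where X: "mm_space X" and PX: "P = pyramid_of X" by blast
  obtain x0 where x0: "x0 \<in> mm_carrier X" and pos: "measure (mm_meas X) (cball_mm X x0 r) > 0"
    using mm_pos_ball[OF X assms(2)] by blast
  define c where "c = measure (mm_meas X) (cball_mm X x0 r)"
  have ne: "P \<noteq> {}" using assms(1) by (simp add: pyramid_def)
  have "c \<le> (INF Y\<in>P. SUP y\<in>mm_carrier Y. measure (mm_meas Y) (cball_mm Y y r))"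
  proof (rule cINF_greatest[OF ne])
    fix Y assume "Y \<in> P"
    then have Y: "mm_space Y" "dominated_by Y X" using PX by (auto simp: pyramid_of_def)
    obtain y where y: "y \<in> mm_carrier Y" and le: "c \<le> measure (mm_meas Y) (cball_mm Y y r)"
      using mm_dom_ball[OF X Y x0] unfolding c_def by blast
    have PY: "prob_space (mm_meas Y)" using Y by (simp add: mm_space_def)
    have bdd: "bdd_above ((\<lambda>y. measure (mm_meas Y) (cball_mm Y y r)) ` mm_carrier Y)"
      by (rule bdd_aboveI2[where M=1]) (rule prob_space.prob_le_1[OF PY])
    show "c \<le> (SUP y\<in>mm_carrier Y. measure (mm_meas Y) (cball_mm Y y r))"
      using le cSUP_upper[OF y bdd] by linarith
  qed
  then show False using assms(3) pos c_def by simp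
qed

end
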